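(* Let $\mathbb{K}$ be a field of characteristic zero, $a_1,\ldots,a_s\in\mathbb{Z}^d$, $A$ the $d\times s$ matrix with columns $a_i$, and $\varphi:(\mathbb{K}\setminus\{0\})^d\to\mathbb{K}^s$, $x\mapsto(x^{a_1},\ldots,x^{a_s})$. Let $n\ge1$, let $\alpha_1<\cdots<\alpha_D$ be the elements of $\Lambda_{d,n}$, and let $J=\{\beta_1,\ldots,\beta_D\}\subset\Lambda_{s,n}$ with $\beta_1<\cdots<\beta_D$. Let $L_J$ be the $D\times D$ submatrix of $D^n_x(\varphi)$ formed by the rows $\beta_1,\ldots,\beta_D$ and all columns. Then for $x\in(\mathbb{K}\setminus\{0\})^d$, $$\det(L_J)=\frac{x^{A\beta_1+\cdots+A\beta_D}}{x^{\alpha_1+\cdots+\alpha_D}}\det(L_J^c),$$ where $L_J^c=(c_{\beta_i,\alpha_j})_{i,j}$.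
   Context: $\Lambda_{t,n}=\{\gamma\in\mathbb{N}^t:1\le|\gamma|\le n\}$ with graded lexicographic order; $|\gamma|$ the sum of entries; $D=\binom{n+d}{d}-1$, $M=\binom{n+s}{s}-1$; $\alpha!=\prod_i\alpha(i)!$; $\binom\beta\gamma=\prod_i\binom{\beta(i)}{\gamma(i)}$; $x^m=\prod_ix_i^{m(i)}$. For a morphism $\varphi=(g_1,\ldots,g_s)$ regular at $x$, $D^n_x(\varphi)=\big(\frac1{\alpha!}\frac{\partial^\alpha(\varphi-\varphi(x))^\beta}{\partial X^\alpha}|_x\big)_{\beta\in\Lambda_{s,n},\alpha\in\Lambda_{d,n}}$ (an $M\times D$ matrix), where $(\varphi-\varphi(x))^\beta=\prod_j(g_j-g_j(x))^{\beta(j)}$. With $A_1,\ldots,A_d$ the rows of $A$: $b_{\gamma,\alpha}=\prod_{i=1}^d\prod_{j=0}^{\alpha(i)-1}(A_i\cdot\gamma-j)$ and $c_{\beta,\alpha}=\frac1{\alpha!}\sum_{\gamma\le\beta,\gamma\ne0}(-1)^{|\beta-\gamma|}\binom\beta\gamma b_{\gamma,\alpha}$ (constants depending only on $A$, $\beta$, $\alpha$). *)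

theory Defs
  imports "HOL-Library.Poly_Mapping" "Jordan_Normal_Form.Determinant"
begin

text \<open>Multi-indices in \<open>\<nat>^t\<close> are functions \<open>nat \<Rightarrow> nat\<close> vanishing outside \<open>{0..<t}\<close>.\<close>

definition mabs :: "nat \<Rightarrow> (nat \<Rightarrow> nat) \<Rightarrow> nat" where
  "mabs t \<gamma> = (\<Sum>i<t. \<gamma> i)"

definition Lambda :: "nat \<Rightarrow> nat \<Rightarrow> (nat \<Rightarrow> nat) set" where
  "Lambda t n = {\<gamma>. (\<forall>i\<ge>t. \<gamma> i = 0) \<and> 1 \<le> mabs t \<gamma> \<and> mabs t \<gamma> \<le> n}"

definition grlex_less :: "nat \<Rightarrow> (nat \<Rightarrow> nat) \<Rightarrow> (nat \<Rightarrow> nat) \<Rightarrow> bool" where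
  "grlex_less t \<gamma> \<delta> \<longleftrightarrow> mabs t \<gamma> < mabs t \<delta> \<or>
     (mabs t \<gamma> = mabs t \<delta> \<and> (\<exists>i<t. (\<forall>j<i. \<gamma> j = \<delta> j) \<and> \<gamma> i < \<delta> i))"

definition mfact :: "nat \<Rightarrow> (nat \<Rightarrow> nat) \<Rightarrow> nat" where
  "mfact t \<alpha> = (\<Prod>i<t. fact (\<alpha> i))"

definition mbinom :: "nat \<Rightarrow> (nat \<Rightarrow> nat) \<Rightarrow> (nat \<Rightarrow> nat) \<Rightarrow> nat" where
  "mbinom t \<beta> \<gamma> = (\<Prod>i<t. \<beta> i choose \<gamma> i)"

definition mpowi :: "nat \<Rightarrow> (nat \<Rightarrow> 'a::field) \<Rightarrow> (nat \<Rightarrow> int) \<Rightarrow> 'a" where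
  "mpowi d x v = (\<Prod>i<d. x i powi v i)"

text \<open>The vector \<open>A\<beta> = \<Sum>_k \<beta>_k a_k \<in> \<int>^d\<close>; \<open>a k i\<close> is entry \<open>i\<close> of column \<open>a_k\<close>.\<close>
definition Amul :: "nat \<Rightarrow> (nat \<Rightarrow> nat \<Rightarrow> int) \<Rightarrow> (nat \<Rightarrow> nat) \<Rightarrow> (nat \<Rightarrow> int)" where
  "Amul s a \<beta> = (\<lambda>i. \<Sum>k<s. a k i * int (\<beta> k))"

type_synonym 'a laurent = "(nat \<Rightarrow>\<^sub>0 int) \<Rightarrow>\<^sub>0 'a"

definition Lmonom :: "nat \<Rightarrow> (nat \<Rightarrow> int) \<Rightarrow> 'a::comm_ring_1 laurent" where
  "Lmonom d v = Poly_Mapping.single (\<Sum>i<d. Poly_Mapping.single i (v i)) 1"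

definition Lconst :: "'a::comm_ring_1 \<Rightarrow> 'a laurent" where
  "Lconst c = Poly_Mapping.single 0 c"

definition Lderiv :: "nat \<Rightarrow> 'a::comm_ring_1 laurent \<Rightarrow> 'a laurent" where
  "Lderiv i p = (\<Sum>m\<in>Poly_Mapping.keys p.
     Poly_Mapping.single (m - Poly_Mapping.single i 1) (of_int (Poly_Mapping.lookup m i) * Poly_Mapping.lookup p m))"

fun Lderivs :: "nat \<Rightarrow> (nat \<Rightarrow> nat) \<Rightarrow> 'a::comm_ring_1 laurent \<Rightarrow> 'a laurent" where
  "Lderivs 0 \<alpha> p = p"
| "Lderivs (Suc d) \<alpha> p = Lderivs d \<alpha> ((Lderiv d ^^ \<alpha> d) p)"

definition Leval :: "nat \<Rightarrow> (nat \<Rightarrow> 'a::field) \<Rightarrow> 'a laurent \<Rightarrow> 'a" where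
  "Leval d x p = (\<Sum>m\<in>Poly_Mapping.keys p. Poly_Mapping.lookup p m * mpowi d x (Poly_Mapping.lookup m))"

text \<open>Entry \<open>(\<beta>,\<alpha>)\<close> of \<open>D^n_x(\<phi>)\<close> for \<open>\<phi> = (X^{a_1},\<dots>,X^{a_s})\<close>:
  \<open>(1/\<alpha>!) \<partial>^\<alpha>(\<phi> - \<phi>(x))^\<beta> |_x\<close>.\<close>
definition Dentry :: "nat \<Rightarrow> nat \<Rightarrow> (nat \<Rightarrow> nat \<Rightarrow> int) \<Rightarrow> (nat \<Rightarrow> 'a::field) \<Rightarrow>
    (nat \<Rightarrow> nat) \<Rightarrow> (nat \<Rightarrow> nat) \<Rightarrow> 'a" where
  "Dentry d s a x \<beta> \<alpha> =
     Leval d x (Lderivs d \<alpha> (\<Prod>k<s. (Lmonom d (a k) - Lconst (mpowi d x (a k))) ^ \<beta> k))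
     / of_nat (mfact d \<alpha>)"

definition bconst :: "nat \<Rightarrow> nat \<Rightarrow> (nat \<Rightarrow> nat \<Rightarrow> int) \<Rightarrow> (nat \<Rightarrow> nat) \<Rightarrow> (nat \<Rightarrow> nat) \<Rightarrow> int" where
  "bconst d s a \<gamma> \<alpha> = (\<Prod>i<d. \<Prod>j<\<alpha> i. Amul s a \<gamma> i - int j)"

definition cconst :: "nat \<Rightarrow> nat \<Rightarrow> (nat \<Rightarrow> nat \<Rightarrow> int) \<Rightarrow> (nat \<Rightarrow> nat) \<Rightarrow> (nat \<Rightarrow> nat) \<Rightarrow> 'a::field" where
  "cconst d s a \<beta> \<alpha> = (1 / of_nat (mfact d \<alpha>)) *
     (\<Sum>\<gamma>\<in>{\<gamma>. (\<forall>i. \<gamma> i \<le> \<beta> i) \<and> \<gamma> \<noteq> (\<lambda>_. 0)}.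
        (-1) ^ (mabs s \<beta> - mabs s \<gamma>) * of_nat (mbinom s \<beta> \<gamma>) * of_int (bconst d s a \<gamma> \<alpha>))"

end

theory Submission
  imports Defs
begin

definition mon :: "nat \<Rightarrow> (nat \<Rightarrow> int) \<Rightarrow> (nat \<Rightarrow>\<^sub>0 int)" where
  "mon d v = (\<Sum>i<d. Poly_Mapping.single i (v i))"

lemma lookup_mon: "Poly_Mapping.lookup (mon d v) i = (if i < d then v i else 0)"
  by (simp add: mon_def lookup_sum lookup_single when_def)

lemma mon_add: "mon d (\<lambda>i. v i + w i) = mon d v + mon d w"
  by (simp add: mon_def single_add sum.distrib)

lemma Lmonom_mon: "Lmonom d v = Poly_Mapping.single (mon d v) 1"
  by (simp add: Lmonom_def mon_def)

lemma Lderiv_eq_sum: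
  assumes "finite K" "Poly_Mapping.keys p \<subseteq> K"
  shows "Lderiv i p = (\<Sum>m\<in>K. Poly_Mapping.single (m - Poly_Mapping.single i 1)
            (of_int (Poly_Mapping.lookup m i) * Poly_Mapping.lookup p m))"
  unfolding Lderiv_def
  by (rule sum.mono_neutral_left[OF assms(1) assms(2)]) (auto simp: in_keys_iff)

lemma Lderiv_add: "Lderiv i (p + q) = Lderiv i p + Lderiv i q"
proof -
  let ?K = "Poly_Mapping.keys p \<union> Poly_Mapping.keys q"
  have f: "finite ?K" by simp
  show ?thesis
    apply (subst Lderiv_eq_sum[OF f], rule keys_add)
    apply (subst Lderiv_eq_sum[OF f, of p], simp)
    apply (subst Lderiv_eq_sum[OF f, of q], simp)
    by (simp add: lookup_add distrib_left single_add sum.distrib)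
qed

lemma Lderiv_zero: "Lderiv i 0 = 0"
  by (simp add: Lderiv_def)

lemma Lderiv_sum: "Lderiv i (sum f A) = (\<Sum>a\<in>A. Lderiv i (f a))"
  by (induction A rule: infinite_finite_induct) (auto simp: Lderiv_zero Lderiv_add)

lemma Lderiv_single: "Lderiv i (Poly_Mapping.single m c) =
   Poly_Mapping.single (m - Poly_Mapping.single i 1) (of_int (Poly_Mapping.lookup m i) * c)"
  by (cases "c = 0") (simp_all add: Lderiv_def Lderiv_zero)

lemma Lderiv_pow_sum: "(Lderiv i ^^ k) (sum f A) = (\<Sum>a\<in>A. (Lderiv i ^^ k) (f a))"
  by (induction k) (simp_all add: Lderiv_sum)

lemma Lderiv_pow_single: "(Lderiv i ^^ k) (Poly_Mapping.single m c) =
   Poly_Mapping.single (m - Poly_Mapping.single i (int k))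
     (c * of_int (\<Prod>j<k. Poly_Mapping.lookup m i - int j))"
proof (induction k)
  case 0
  then show ?case by simp
next
  case (Suc k)
  have e: "m - (Poly_Mapping.single i 1 + Poly_Mapping.single i (int k)) = m - Poly_Mapping.single i (1 + int k)"
    by (simp only: single_add)
  show ?case
    by (simp add: Suc Lderiv_single lookup_minus e algebra_simps)
qed

lemma Lderivs_sum: "Lderivs d \<alpha> (sum f A) = (\<Sum>a\<in>A. Lderivs d \<alpha> (f a))"
  by (induction d arbitrary: f) (simp_all add: Lderiv_pow_sum)

lemma Lderivs_single: "Lderivs d \<alpha> (Poly_Mapping.single m c) =
   Poly_Mapping.single (m - (\<Sum>i<d. Poly_Mapping.single i (int (\<alpha> i))))
     (c * of_int (\<Prod>i<d. \<Prod>j<\<alpha> i. Poly_Mapping.lookup m i - int j))"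
proof (induction d arbitrary: m c)
  case 0
  then show ?case by simp
next
  case (Suc d)
  have p: "(\<Prod>i<d. \<Prod>j<\<alpha> i. Poly_Mapping.lookup (m - Poly_Mapping.single d (int (\<alpha> d))) i - int j)
     = (\<Prod>i<d. \<Prod>j<\<alpha> i. Poly_Mapping.lookup m i - int j)"
    by (rule prod.cong, simp, simp add: lookup_minus lookup_single when_def)
  show ?case
    by (simp add: Suc Lderiv_pow_single p algebra_simps)
qed

lemma Leval_eq_sum:
  assumes "finite K" "Poly_Mapping.keys p \<subseteq> K"
  shows "Leval d x p = (\<Sum>m\<in>K. Poly_Mapping.lookup p m * mpowi d x (Poly_Mapping.lookup m))"
  unfolding Leval_def
  by (rule sum.mono_neutral_left[OF assms(1) assms(2)]) (auto simp: in_keys_iff)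

lemma Leval_add: "Leval d x (p + q) = Leval d x p + Leval d x q"
proof -
  let ?K = "Poly_Mapping.keys p \<union> Poly_Mapping.keys q"
  have f: "finite ?K" by simp
  show ?thesis
    apply (subst Leval_eq_sum[OF f], rule keys_add)
    apply (subst Leval_eq_sum[OF f, of p], simp)
    apply (subst Leval_eq_sum[OF f, of q], simp)
    by (simp add: lookup_add distrib_right sum.distrib)
qed

lemma Leval_sum: "Leval d x (sum f A) = (\<Sum>a\<in>A. Leval d x (f a))"
proof (induction A rule: infinite_finite_induct)
  case (insert a A)
  then show ?case by (simp add: Leval_add)
qed (simp_all add: Leval_def)

lemma Leval_single: "Leval d x (Poly_Mapping.single m c) = c * mpowi d x (Poly_Mapping.lookup m)"
  by (cases "c = 0") (simp_all add: Leval_def)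

lemma mpowi_cong: "(\<And>i. i < d \<Longrightarrow> v i = w i) \<Longrightarrow> mpowi d x v = mpowi d x w"
  by (simp add: mpowi_def)

lemma mpowi_add: "\<forall>i<d. x i \<noteq> 0 \<Longrightarrow> mpowi d x (\<lambda>i. v i + w i) = mpowi d x v * mpowi d x w"
  by (simp add: mpowi_def power_int_add prod.distrib)

lemma mpowi_diff: "\<forall>i<d. x i \<noteq> 0 \<Longrightarrow> mpowi d x (\<lambda>i. v i - w i) = mpowi d x v / mpowi d x w"
  by (simp add: mpowi_def power_int_diff prod_dividef)

lemma mpowi_power: "mpowi d x v ^ r = mpowi d x (\<lambda>i. int r * v i)"
  by (simp add: mpowi_def power_int_power' prod_power_distrib mult.commute)

lemma mpowi_zero: "mpowi d x (\<lambda>i. 0) = 1"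
  by (simp add: mpowi_def)

lemma mpowi_prod: "\<forall>i<d. x i \<noteq> 0 \<Longrightarrow> (\<Prod>k\<in>K. mpowi d x (v k)) = mpowi d x (\<lambda>i. \<Sum>k\<in>K. v k i)"
  by (induction K rule: infinite_finite_induct) (simp_all add: mpowi_zero mpowi_add)

lemma F_monom:
  assumes "\<forall>i<d. x i \<noteq> 0"
  shows "Leval d x (Lderivs d \<alpha> (Poly_Mapping.single (mon d v) c)) =
    c * of_int (\<Prod>i<d. \<Prod>j<\<alpha> i. v i - int j) * (mpowi d x v / mpowi d x (\<lambda>i. int (\<alpha> i)))"
proof -
  have p: "(\<Prod>i<d. \<Prod>j<\<alpha> i. Poly_Mapping.lookup (mon d v) i - int j) = (\<Prod>i<d. \<Prod>j<\<alpha> i. v i - int j)"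
    by (rule prod.cong, simp, simp add: lookup_mon)
  have "mpowi d x (Poly_Mapping.lookup (mon d v - (\<Sum>i<d. Poly_Mapping.single i (int (\<alpha> i)))))
     = mpowi d x (\<lambda>i. v i - int (\<alpha> i))"
    by (rule mpowi_cong) (simp add: lookup_minus lookup_mon lookup_sum lookup_single when_def)
  also have "\<dots> = mpowi d x v / mpowi d x (\<lambda>i. int (\<alpha> i))"
    using assms by (rule mpowi_diff)
  finally show ?thesis
    by (simp add: Lderivs_single Leval_single p)
qed

lemma single0_power: "Poly_Mapping.single 0 (e::'a::comm_ring_1) ^ r = Poly_Mapping.single (0::nat\<Rightarrow>\<^sub>0int) (e ^ r)"
  by (induction r) (simp_all add: mult_single)

lemma Lmonom_power: "(Lmonom d v :: 'a::comm_ring_1 laurent) ^ j = Poly_Mapping.single (mon d (\<lambda>i. v i * int j)) 1"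
proof (induction j)
  case 0
  have "mon d (\<lambda>i. v i * int 0) = 0" by (simp add: mon_def)
  then show ?case by simp
next
  case (Suc j)
  have "mon d v + mon d (\<lambda>i. v i * int j) = mon d (\<lambda>i. v i * int (Suc j))"
    by (simp add: mon_add[symmetric] algebra_simps)
  then show ?case unfolding power_Suc Suc.IH by (simp add: Lmonom_mon mult_single)
qed

definition Sset :: "(nat \<Rightarrow> nat) \<Rightarrow> (nat \<Rightarrow> nat) set" where
  "Sset \<beta> = {\<gamma>. \<forall>i. \<gamma> i \<le> \<beta> i}"

lemma Sset_step:
  assumes "\<forall>i\<ge>Suc s. \<beta> i = 0"
  shows "Sset \<beta> = (\<lambda>(g, j). g(s := j)) ` (Sset (\<beta>(s := 0)) \<times> {..\<beta> s})"
proof (rule equalityI; rule subsetI)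
  fix \<gamma> assume "\<gamma> \<in> Sset \<beta>"
  then have g: "\<forall>i. \<gamma> i \<le> \<beta> i" by (simp add: Sset_def)
  have 1: "\<gamma>(s := 0) \<in> Sset (\<beta>(s := 0))" unfolding Sset_def using g by simp
  have 2: "\<gamma> s \<in> {..\<beta> s}" using g by simp
  have 3: "\<gamma> = (\<lambda>(g, j). g(s := j)) (\<gamma>(s := 0), \<gamma> s)" by simp
  show "\<gamma> \<in> (\<lambda>(g, j). g(s := j)) ` (Sset (\<beta>(s := 0)) \<times> {..\<beta> s})"
    using 1 2 by (intro image_eqI[where x="(\<gamma>(s := 0), \<gamma> s)"]) simp_all
next
  fix \<gamma> assume "\<gamma> \<in> (\<lambda>(g, j). g(s := j)) ` (Sset (\<beta>(s := 0)) \<times> {..\<beta> s})"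
  then obtain g j where "g \<in> Sset (\<beta>(s := 0))" "j \<le> \<beta> s" "\<gamma> = g(s := j)" by auto
  then show "\<gamma> \<in> Sset \<beta>" unfolding Sset_def
  proof (intro CollectI allI)
    fix i show "\<gamma> i \<le> \<beta> i"
    proof (cases "i = s")
      case True then show ?thesis using \<open>j \<le> \<beta> s\<close> \<open>\<gamma> = g(s := j)\<close> by simp
    next
      case False then show ?thesis using \<open>g \<in> Sset (\<beta>(s := 0))\<close> \<open>\<gamma> = g(s := j)\<close>
        unfolding Sset_def by (metis fun_upd_other mem_Collect_eq)
    qed
  qed
qed

lemma Sset_inj: "inj_on (\<lambda>(g, j). g(s := j)) (Sset (\<beta>(s := 0)) \<times> {..\<beta> s})"
proof (rule inj_onI, clarify)
  fix g j g' j'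
  assume a: "g \<in> Sset (\<beta>(s := 0))" "g' \<in> Sset (\<beta>(s := 0))" "g(s := j) = g'(s := j')"
  have z: "g s = 0" "g' s = 0" using a(1,2) unfolding Sset_def by (metis fun_upd_same le_zero_eq mem_Collect_eq)+
  have "g i = g' i" for i
  proof (cases "i = s")
    case True then show ?thesis using z by simp
  next
    case False then show ?thesis using fun_cong[OF a(3), of i] by simp
  qed
  moreover have "j = j'" using fun_cong[OF a(3), of s] by simp
  ultimately show "g = g' \<and> j = j'" by auto
qed

lemma Sset_zero: assumes "\<forall>i\<ge>0. \<beta> i = 0" shows "Sset \<beta> = {\<lambda>_. 0}"
proof -
  have "\<gamma> \<in> Sset \<beta> \<longleftrightarrow> \<gamma> = (\<lambda>_. 0)" for \<gamma>
    using assms unfolding Sset_def by (auto simp: fun_eq_iff)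
  then show ?thesis by blast
qed

lemma upd_mabs:
  fixes \<beta> g :: "nat \<Rightarrow> nat"
  assumes g: "g \<in> Sset (\<beta>(s := 0))" and j: "j \<le> \<beta> s"
  shows "mabs (Suc s) \<beta> - mabs (Suc s) (g(s := j)) = (mabs s (\<beta>(s := 0)) - mabs s g) + (\<beta> s - j)"
proof -
  have gb: "g k \<le> (\<beta>(s := 0)) k" for k using g unfolding Sset_def by blast
  have m1: "mabs s g \<le> mabs s (\<beta>(s := 0))" unfolding mabs_def by (rule sum_mono) (rule gb)
  have e1a: "mabs s (g(s := j)) = mabs s g"
    unfolding mabs_def by (rule sum.cong) simp_all
  have e1b: "mabs s \<beta> = mabs s (\<beta>(s := 0))"
    unfolding mabs_def by (rule sum.cong) simp_all
  have a1: "mabs (Suc s) \<beta> = mabs s (\<beta>(s := 0)) + \<beta> s"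
    using e1b unfolding mabs_def sum.lessThan_Suc by (simp only:)
  have a2: "mabs (Suc s) (g(s := j)) = mabs s g + j"
    using e1a unfolding mabs_def sum.lessThan_Suc by simp
  show ?thesis unfolding a1 a2 using m1 j by linarith
qed
lemma upd_binom:
  fixes \<beta> g :: "nat \<Rightarrow> nat"
  shows "mbinom (Suc s) \<beta> (g(s := j)) = mbinom s (\<beta>(s := 0)) g * (\<beta> s choose j)"
proof -
  have p1: "(\<Prod>i<s. \<beta> i choose (g(s := j)) i) = (\<Prod>i<s. (\<beta>(s := 0)) i choose g i)"
    by (rule prod.cong) simp_all
  show ?thesis
    unfolding mbinom_def prod.lessThan_Suc p1 by simp
qed

lemma upd_prod:
  fixes \<beta> g :: "nat \<Rightarrow> nat" and c :: "nat \<Rightarrow> 'a::comm_ring_1"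
  shows "(\<Prod>k<Suc s. c k ^ (\<beta> k - (g(s := j)) k)) = (\<Prod>k<s. c k ^ ((\<beta>(s := 0)) k - g k)) * c s ^ (\<beta> s - j)"
proof -
  have p2: "(\<Prod>k<s. c k ^ (\<beta> k - (g(s := j)) k)) = (\<Prod>k<s. c k ^ ((\<beta>(s := 0)) k - g k))"
    by (rule prod.cong) simp_all
  show ?thesis
    unfolding prod.lessThan_Suc p2 by simp
qed

lemma upd_amul:
  fixes g :: "nat \<Rightarrow> nat"
  shows "Amul (Suc s) a (g(s := j)) = (\<lambda>i. Amul s a g i + a s i * int j)"
proof -
  have p3: "(\<Sum>k<s. a k i * int ((g(s := j)) k)) = (\<Sum>k<s. a k i * int (g k))" for i
    by (rule sum.cong) simp_all
  show ?thesis
    unfolding Amul_def sum.lessThan_Suc p3 by simp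
qed

lemma expansion:
  fixes c :: "nat \<Rightarrow> 'a::comm_ring_1"
  shows "\<forall>\<beta>. (\<forall>i\<ge>s. \<beta> i = 0) \<longrightarrow> finite (Sset \<beta>) \<and>
    (\<Prod>k<s. (Lmonom d (a k) - Lconst (c k)) ^ \<beta> k) =
    (\<Sum>\<gamma>\<in>Sset \<beta>. Poly_Mapping.single (mon d (Amul s a \<gamma>))
        (of_nat (mbinom s \<beta> \<gamma>) * (-1) ^ (mabs s \<beta> - mabs s \<gamma>) * (\<Prod>k<s. c k ^ (\<beta> k - \<gamma> k))))"
proof (induction s)
  case 0
  show ?case
  proof (intro allI impI)
    fix \<beta> :: "nat \<Rightarrow> nat" assume "\<forall>i\<ge>0. \<beta> i = 0"
    then have S: "Sset \<beta> = {\<lambda>_. 0}" by (rule Sset_zero)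
    have "mon d (Amul 0 a (\<lambda>_. 0)) = 0" by (simp add: mon_def Amul_def)
    then show "finite (Sset \<beta>) \<and>
    (\<Prod>k<0. (Lmonom d (a k) - Lconst (c k)) ^ \<beta> k) =
    (\<Sum>\<gamma>\<in>Sset \<beta>. Poly_Mapping.single (mon d (Amul 0 a \<gamma>))
        (of_nat (mbinom 0 \<beta> \<gamma>) * (-1) ^ (mabs 0 \<beta> - mabs 0 \<gamma>) * (\<Prod>k<0. c k ^ (\<beta> k - \<gamma> k))))"
      using S by (simp add: mbinom_def mabs_def)
  qed
next
  case (Suc s)
  show ?case
  proof (intro allI impI)
    fix \<beta> :: "nat \<Rightarrow> nat" assume z: "\<forall>i\<ge>Suc s. \<beta> i = 0"
    define \<beta>' where "\<beta>' = \<beta>(s := 0)"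
    have z': "\<forall>i\<ge>s. \<beta>' i = 0" using z by (simp add: \<beta>'_def)
    have fin': "finite (Sset \<beta>')" and IH: "(\<Prod>k<s. (Lmonom d (a k) - Lconst (c k)) ^ \<beta>' k) =
    (\<Sum>\<gamma>\<in>Sset \<beta>'. Poly_Mapping.single (mon d (Amul s a \<gamma>))
        (of_nat (mbinom s \<beta>' \<gamma>) * (-1) ^ (mabs s \<beta>' - mabs s \<gamma>) * (\<Prod>k<s. c k ^ (\<beta>' k - \<gamma> k))))"
      using Suc.IH z' by blast+
    note St = Sset_step[OF z, folded \<beta>'_def]
    note inj = Sset_inj[of s \<beta>, folded \<beta>'_def]
    have fin: "finite (Sset \<beta>)" unfolding St using fin' by simp
    let ?T = "\<lambda>s \<beta> \<gamma>. Poly_Mapping.single (mon d (Amul s a \<gamma>))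
        (of_nat (mbinom s \<beta> \<gamma>) * (-1) ^ (mabs s \<beta> - mabs s \<gamma>) * (\<Prod>k<s. c k ^ (\<beta> k - \<gamma> k)))"
    let ?B = "\<lambda>j. of_nat (\<beta> s choose j) * Lmonom d (a s) ^ j * (- Lconst (c s)) ^ (\<beta> s - j)"
    have "(\<Prod>k<Suc s. (Lmonom d (a k) - Lconst (c k)) ^ \<beta> k) =
       (\<Prod>k<s. (Lmonom d (a k) - Lconst (c k)) ^ \<beta>' k) * (Lmonom d (a s) + - Lconst (c s)) ^ \<beta> s"
      unfolding prod.lessThan_Suc \<beta>'_def by (simp; rule prod.cong; simp)
    also have "\<dots> = (\<Sum>g\<in>Sset \<beta>'. ?T s \<beta>' g) * (\<Sum>j\<le>\<beta> s. ?B j)"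
      unfolding IH binomial_ring by simp
    also have "\<dots> = (\<Sum>g\<in>Sset \<beta>'. \<Sum>j\<le>\<beta> s. ?T s \<beta>' g * ?B j)"
      by (rule sum_product)
    also have "\<dots> = (\<Sum>g\<in>Sset \<beta>'. \<Sum>j\<le>\<beta> s. ?T (Suc s) \<beta> (g(s := j)))"
    proof (intro sum.cong refl)
      fix g j assume g: "g \<in> Sset \<beta>'" and j: "j \<in> {..\<beta> s}"
      have jj: "j \<le> \<beta> s" using j by simp
      note U = upd_binom[where s=s and \<beta>=\<beta> and g=g and j=j, folded \<beta>'_def]
        upd_prod[where s=s and \<beta>=\<beta> and g=g and j=j and c=c, folded \<beta>'_def]
        upd_amul[where s=s and a=a and g=g and j=j]
        upd_mabs[OF g[unfolded \<beta>'_def] jj, folded \<beta>'_def]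
      have B: "?B j = Poly_Mapping.single (mon d (\<lambda>i. a s i * int j)) (of_nat (\<beta> s choose j) * (- c s) ^ (\<beta> s - j))"
        by (simp add: single_of_nat[symmetric] Lmonom_power Lconst_def single_uminus[symmetric]
            single0_power mult_single del: single_of_nat)
      have M: "mon d (Amul s a g) + mon d (\<lambda>i. a s i * int j) = mon d (Amul (Suc s) a (g(s := j)))"
        using j by (simp add: U(3) mon_add)
      have C: "of_nat (mbinom s \<beta>' g) * (-1) ^ (mabs s \<beta>' - mabs s g) * (\<Prod>k<s. c k ^ (\<beta>' k - g k))
          * (of_nat (\<beta> s choose j) * (- c s) ^ (\<beta> s - j)) =
          of_nat (mbinom (Suc s) \<beta> (g(s := j))) * (-1) ^ (mabs (Suc s) \<beta> - mabs (Suc s) (g(s := j)))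
          * (\<Prod>k<Suc s. c k ^ (\<beta> k - (g(s := j)) k))"
        unfolding U(1) U(4) U(2) power_add power_minus[of "c s"] of_nat_mult by (simp only: mult_ac)
      show "?T s \<beta>' g * ?B j = ?T (Suc s) \<beta> (g(s := j))"
        unfolding B mult_single M C add_0 ..
    qed
    also have "\<dots> = (\<Sum>(g, j)\<in>Sset \<beta>' \<times> {..\<beta> s}. ?T (Suc s) \<beta> (g(s := j)))"
      by (rule sum.cartesian_product)
    also have "\<dots> = (\<Sum>\<gamma>\<in>Sset \<beta>. ?T (Suc s) \<beta> \<gamma>)"
      unfolding St by (subst sum.reindex[OF inj]) (simp add: case_prod_beta')
    finally show "finite (Sset \<beta>) \<and> (\<Prod>k<Suc s. (Lmonom d (a k) - Lconst (c k)) ^ \<beta> k) =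
       (\<Sum>\<gamma>\<in>Sset \<beta>. ?T (Suc s) \<beta> \<gamma>)" using fin by simp
  qed
qed

lemma bconst_zero:
  assumes "ii < d" "\<alpha> ii \<noteq> 0"
  shows "bconst d s a (\<lambda>_. 0) \<alpha> = 0"
proof -
  have "(\<Prod>j<\<alpha> ii. Amul s a (\<lambda>_. 0) ii - int j) = 0"
    by (rule prod_zero) (use assms(2) in \<open>auto intro!: bexI[of _ 0] simp: Amul_def\<close>)
  then show ?thesis unfolding bconst_def
    by (intro prod_zero) (use assms(1) in auto)
qed

lemma coef_mpowi:
  assumes x: "\<forall>i<d. x i \<noteq> 0" and g: "\<gamma> \<in> Sset \<beta>"
  shows "(\<Prod>k<s. mpowi d x (a k) ^ (\<beta> k - \<gamma> k)) * mpowi d x (Amul s a \<gamma>) = mpowi d x (Amul s a \<beta>)"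
proof -
  have gb: "\<gamma> k \<le> \<beta> k" for k using g unfolding Sset_def by blast
  have "(\<Prod>k<s. mpowi d x (a k) ^ (\<beta> k - \<gamma> k)) = (\<Prod>k<s. mpowi d x (\<lambda>i. int (\<beta> k - \<gamma> k) * a k i))"
    by (simp add: mpowi_power)
  also have "\<dots> = mpowi d x (\<lambda>i. \<Sum>k<s. int (\<beta> k - \<gamma> k) * a k i)"
    using x by (rule mpowi_prod)
  finally have "(\<Prod>k<s. mpowi d x (a k) ^ (\<beta> k - \<gamma> k)) * mpowi d x (Amul s a \<gamma>)
      = mpowi d x (\<lambda>i. (\<Sum>k<s. int (\<beta> k - \<gamma> k) * a k i) + Amul s a \<gamma> i)"
    using x by (simp add: mpowi_add)
  also have "(\<lambda>i. (\<Sum>k<s. int (\<beta> k - \<gamma> k) * a k i) + Amul s a \<gamma> i) = Amul s a \<beta>"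
  proof
    fix i
    have "(\<Sum>k<s. int (\<beta> k - \<gamma> k) * a k i) + Amul s a \<gamma> i = (\<Sum>k<s. int (\<beta> k - \<gamma> k) * a k i + a k i * int (\<gamma> k))"
      by (simp add: Amul_def sum.distrib)
    also have "\<dots> = (\<Sum>k<s. a k i * int (\<beta> k))"
      by (rule sum.cong) (simp_all add: of_nat_diff gb algebra_simps)
    finally show "(\<Sum>k<s. int (\<beta> k - \<gamma> k) * a k i) + Amul s a \<gamma> i = Amul s a \<beta> i"
      by (simp add: Amul_def)
  qed
  finally show ?thesis .
qed

lemma Dentry_eq:
  fixes x :: "nat \<Rightarrow> 'a::field"
  assumes x: "\<forall>i<d. x i \<noteq> 0" and \<beta>: "\<forall>i\<ge>s. \<beta> i = 0" and \<alpha>: "ii < d" "\<alpha> ii \<noteq> 0"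
  shows "Dentry d s a x \<beta> \<alpha> = mpowi d x (Amul s a \<beta>) / mpowi d x (\<lambda>l. int (\<alpha> l)) * cconst d s a \<beta> \<alpha>"
proof -
  let ?c = "\<lambda>k. mpowi d x (a k)"
  let ?R = "mpowi d x (Amul s a \<beta>) / mpowi d x (\<lambda>l. int (\<alpha> l))"
  let ?t = "\<lambda>\<gamma>. (-1) ^ (mabs s \<beta> - mabs s \<gamma>) * of_nat (mbinom s \<beta> \<gamma>) * (of_int (bconst d s a \<gamma> \<alpha>) :: 'a)"
  have E: "finite (Sset \<beta>) \<and> (\<Prod>k<s. (Lmonom d (a k) - Lconst (?c k)) ^ \<beta> k) =
    (\<Sum>\<gamma>\<in>Sset \<beta>. Poly_Mapping.single (mon d (Amul s a \<gamma>))
        (of_nat (mbinom s \<beta> \<gamma>) * (-1) ^ (mabs s \<beta> - mabs s \<gamma>) * (\<Prod>k<s. ?c k ^ (\<beta> k - \<gamma> k))))"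
    using expansion[where s=s and d=d and a=a and c="?c"] \<beta> by blast
  have fin: "finite (Sset \<beta>)" using E by blast
  have "Leval d x (Lderivs d \<alpha> (\<Prod>k<s. (Lmonom d (a k) - Lconst (?c k)) ^ \<beta> k))
     = (\<Sum>\<gamma>\<in>Sset \<beta>. (of_nat (mbinom s \<beta> \<gamma>) * (-1) ^ (mabs s \<beta> - mabs s \<gamma>) * (\<Prod>k<s. ?c k ^ (\<beta> k - \<gamma> k)))
         * of_int (bconst d s a \<gamma> \<alpha>) * (mpowi d x (Amul s a \<gamma>) / mpowi d x (\<lambda>l. int (\<alpha> l))))"
    using E by (simp add: Lderivs_sum Leval_sum F_monom[OF x] bconst_def)
  also have "\<dots> = (\<Sum>\<gamma>\<in>Sset \<beta>. ?t \<gamma> * ?R)"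
  proof (rule sum.cong[OF refl])
    fix \<gamma> assume g: "\<gamma> \<in> Sset \<beta>"
    note cm = coef_mpowi[OF x g, where s=s and a=a]
    show "(of_nat (mbinom s \<beta> \<gamma>) * (-1) ^ (mabs s \<beta> - mabs s \<gamma>) * (\<Prod>k<s. ?c k ^ (\<beta> k - \<gamma> k)))
         * of_int (bconst d s a \<gamma> \<alpha>) * (mpowi d x (Amul s a \<gamma>) / mpowi d x (\<lambda>l. int (\<alpha> l))) = ?t \<gamma> * ?R"
      by (simp only: cm[symmetric] times_divide_eq_right mult_ac)
  qed
  also have "\<dots> = (\<Sum>\<gamma>\<in>Sset \<beta>. ?t \<gamma>) * ?R" by (rule sum_distrib_right[symmetric])
  also have "(\<Sum>\<gamma>\<in>Sset \<beta>. ?t \<gamma>) = (\<Sum>\<gamma>\<in>Sset \<beta> - {\<lambda>_. 0}. ?t \<gamma>)"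
  proof (rule sum.mono_neutral_right[OF fin])
    show "\<forall>i\<in>Sset \<beta> - (Sset \<beta> - {\<lambda>_. 0}). ?t i = 0"
      using bconst_zero[where ii=ii and d=d and \<alpha>=\<alpha> and s=s and a=a, OF \<alpha>] by auto
  qed auto
  also have "Sset \<beta> - {\<lambda>_. 0} = {\<gamma>. (\<forall>i. \<gamma> i \<le> \<beta> i) \<and> \<gamma> \<noteq> (\<lambda>_. 0)}"
    by (auto simp: Sset_def)
  finally show ?thesis
    unfolding Dentry_def cconst_def by (simp add: field_simps)
qed

lemma card_T:
  "card {\<gamma>::nat\<Rightarrow>nat. (\<forall>i\<ge>d. \<gamma> i = 0) \<and> mabs d \<gamma> \<le> n} = (n + d choose d)"
proof -
  let ?T = "{\<gamma>::nat\<Rightarrow>nat. (\<forall>i\<ge>d. \<gamma> i = 0) \<and> mabs d \<gamma> \<le> n}"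
  let ?L = "{l::nat list. size l = Suc d \<and> sum_list l = n}"
  let ?f = "\<lambda>\<gamma>::nat\<Rightarrow>nat. map \<gamma> [0..<d] @ [n - mabs d \<gamma>]"
  let ?g = "\<lambda>l::nat list. (\<lambda>i. if i < d then l ! i else 0)"
  have sl: "sum_list (map \<gamma> [0..<d]) = mabs d \<gamma>" for \<gamma> :: "nat \<Rightarrow> nat"
    by (simp add: mabs_def sum_set_upt_conv_sum_list_nat[symmetric] atLeast0LessThan)
  have "bij_betw ?f ?T ?L"
  proof (rule bij_betw_byWitness[where f' = ?g])
    show "\<forall>a\<in>?T. ?g (?f a) = a"
    proof
      fix \<gamma> assume "\<gamma> \<in> ?T"
      then show "?g (?f \<gamma>) = \<gamma>" by (auto simp: nth_append fun_eq_iff)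
    qed
    show "\<forall>l\<in>?L. ?f (?g l) = l"
    proof
      fix l assume l: "l \<in> ?L"
      have m: "mabs d (?g l) = (\<Sum>i<d. l ! i)" unfolding mabs_def by simp
      have s: "sum_list l = (\<Sum>i<Suc d. l ! i)" using l by (simp add: sum_list_sum_nth atLeast0LessThan)
      have s': "(\<Sum>i<d. l ! i) + l ! d = n" using l s by simp
      have last: "n - mabs d (?g l) = l ! d" using s' m by linarith
      show "?f (?g l) = l"
        by (rule nth_equalityI) (use l last in \<open>auto simp: nth_append less_Suc_eq\<close>)
    qed
    show "?f ` ?T \<subseteq> ?L" using sl by auto
    show "?g ` ?L \<subseteq> ?T"
    proof
      fix \<gamma> assume "\<gamma> \<in> ?g ` ?L"
      then obtain l where l: "l \<in> ?L" "\<gamma> = ?g l" by auto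
      have "mabs d \<gamma> = (\<Sum>i<d. l ! i)" unfolding mabs_def l(2) by simp
      also have "\<dots> \<le> (\<Sum>i<Suc d. l ! i)" by simp
      also have "\<dots> = n" using l(1) by (metis (mono_tags, lifting) mem_Collect_eq sum_list_sum_nth atLeast0LessThan)
      finally show "\<gamma> \<in> ?T" using l(2) by auto
    qed
  qed
  then have "card ?T = card ?L" by (rule bij_betw_same_card)
  also have "\<dots> = (n + Suc d - 1) choose n" by (rule card_length_sum_list)
  also have "\<dots> = (n + d choose d)" by (simp add: binomial_symmetric[of n "n + d"])
  finally show ?thesis .
qed

lemma card_Lambda: "card (Lambda d n) = (n + d choose d) - 1"
proof -
  let ?T = "{\<gamma>::nat\<Rightarrow>nat. (\<forall>i\<ge>d. \<gamma> i = 0) \<and> mabs d \<gamma> \<le> n}"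
  have fin: "finite ?T"
    using card_T[of d n] by (intro card_ge_0_finite) (simp add: zero_less_binomial_iff)
  have pos: "1 \<le> mabs d \<gamma>" if "\<gamma> \<noteq> (\<lambda>_. 0)" "\<forall>i\<ge>d. \<gamma> i = 0" for \<gamma>
  proof -
    have "\<exists>i. \<gamma> i \<noteq> 0"
    proof (rule ccontr)
      assume "\<not> (\<exists>i. \<gamma> i \<noteq> 0)"
      then have "\<gamma> = (\<lambda>_. 0)" by auto
      then show False using that(1) by simp
    qed
    then obtain i where i: "\<gamma> i \<noteq> 0" by blast
    then have "i < d" using that(2) by (meson not_less)
    then have "\<gamma> i \<le> mabs d \<gamma>" unfolding mabs_def by (intro member_le_sum) auto
    then show ?thesis using i by simp
  qed
  have e: "Lambda d n = ?T - {\<lambda>_. 0}"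
    using pos by (auto simp: Lambda_def mabs_def)
  have z: "(\<lambda>_. 0) \<in> ?T" by (simp add: mabs_def)
  show ?thesis unfolding e using fin z card_T[of d n] by (simp add: card_Diff_singleton)
qed

lemma sorted_wrt_irrefl_distinct:
  "(\<And>x. \<not> R x x) \<Longrightarrow> sorted_wrt R xs \<Longrightarrow> distinct xs"
  by (induction xs) auto

lemma grlex_irrefl: "\<not> grlex_less t \<gamma> \<gamma>"
  by (auto simp: grlex_less_def)

lemma det_mat_diag: "det (mat_diag n f) = (\<Prod>i<n. (f i::'a::comm_ring_1))"
  by (subst det_upper_triangular[of _ n], auto simp: mat_diag_def upper_triangular_def prod_list_diag_prod atLeast0LessThan)

theorem proposition2p3:
  fixes d s n D :: nat and a :: "nat \<Rightarrow> nat \<Rightarrow> int" and x :: "nat \<Rightarrow> 'a::field"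
    and alphas betas :: "(nat \<Rightarrow> nat) list"
  assumes char0: "CHAR('a) = 0"
    and n: "n \<ge> 1"
    and D: "D = (n + d choose d) - 1"
    and x: "\<forall>i<d. x i \<noteq> 0"
    and alphas: "set alphas = Lambda d n" "sorted_wrt (grlex_less d) alphas"
    and betas: "set betas \<subseteq> Lambda s n" "length betas = D" "sorted_wrt (grlex_less s) betas"
  shows "det (mat D D (\<lambda>(i, j). Dentry d s a x (betas ! i) (alphas ! j))) =
    mpowi d x (\<lambda>l. \<Sum>i<D. Amul s a (betas ! i) l) / mpowi d x (\<lambda>l. \<Sum>j<D. int ((alphas ! j) l))
    * det (mat D D (\<lambda>(i, j). cconst d s a (betas ! i) (alphas ! j)))"
proof -
  have dist: "distinct alphas"
    by (rule sorted_wrt_irrefl_distinct[OF grlex_irrefl alphas(2)])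
  have lenA: "length alphas = D"
    using distinct_card[OF dist] alphas(1) card_Lambda[of d n] D by simp
  have aNZ: "\<exists>i<d. (alphas ! j) i \<noteq> 0" if j: "j < D" for j
  proof (rule ccontr)
    assume "\<not> (\<exists>i<d. (alphas ! j) i \<noteq> 0)"
    then have "mabs d (alphas ! j) = 0" by (simp add: mabs_def)
    moreover have "alphas ! j \<in> Lambda d n" using j lenA alphas(1) nth_mem by metis
    ultimately show False by (simp add: Lambda_def)
  qed
  have bZ: "\<forall>k\<ge>s. (betas ! i) k = 0" if i: "i < D" for i
  proof -
    have "betas ! i \<in> Lambda s n" using i betas(1,2) nth_mem by blast
    then show ?thesis by (simp add: Lambda_def)
  qed
  define r where "r i = mpowi d x (Amul s a (betas ! i))" for i
  define q where "q j = 1 / mpowi d x (\<lambda>l. int ((alphas ! j) l))" for j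
  define M where "M = mat D D (\<lambda>(i, j). cconst d s a (betas ! i) (alphas ! j) :: 'a)"
  have M: "M \<in> carrier_mat D D" by (simp add: M_def)
  have eq: "mat D D (\<lambda>(i, j). Dentry d s a x (betas ! i) (alphas ! j)) = mat_diag D r * M * mat_diag D q"
  proof -
    have "mat_diag D r * M * mat_diag D q = mat D D (\<lambda>(i, j). r i * M $$ (i, j)) * mat_diag D q"
      by (simp add: mat_diag_mult_left[OF M])
    also have "\<dots> = mat D D (\<lambda>(i, j). r i * M $$ (i, j) * q j)"
      by (subst mat_diag_mult_right[of _ D]) auto
    also have "\<dots> = mat D D (\<lambda>(i, j). Dentry d s a x (betas ! i) (alphas ! j))"
    proof (rule eq_matI, simp_all)
      fix i j assume ij: "i < D" "j < D"
      obtain k where k: "k < d" "(alphas ! j) k \<noteq> 0" using aNZ[OF ij(2)] by blast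
      show "r i * M $$ (i, j) * q j = Dentry d s a x (betas ! i) (alphas ! j)"
        unfolding Dentry_eq[where \<alpha>="alphas ! j" and \<beta>="betas ! i" and ii=k and a=a, OF x bZ[OF ij(1)] k] using ij by (simp add: r_def q_def M_def)
    qed
    finally show ?thesis by simp
  qed
  have "det (mat D D (\<lambda>(i, j). Dentry d s a x (betas ! i) (alphas ! j))) =
      (\<Prod>i<D. r i) * det M * (\<Prod>j<D. q j)"
  proof -
    have c1: "mat_diag D r * M \<in> carrier_mat D D" by (rule mult_carrier_mat[OF mat_diag_dim M])
    have "det (mat_diag D r * M * mat_diag D q) = det (mat_diag D r * M) * det (mat_diag D q)"
      by (rule det_mult[OF c1 mat_diag_dim])
    also have "det (mat_diag D r * M) = det (mat_diag D r) * det M"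
      by (rule det_mult[OF mat_diag_dim M])
    finally show ?thesis unfolding eq det_mat_diag .
  qed
  also have "(\<Prod>i<D. r i) = mpowi d x (\<lambda>l. \<Sum>i<D. Amul s a (betas ! i) l)"
    unfolding r_def by (rule mpowi_prod[OF x])
  also have "(\<Prod>j<D. q j) = 1 / mpowi d x (\<lambda>l. \<Sum>j<D. int ((alphas ! j) l))"
    unfolding q_def prod_dividef mpowi_prod[OF x] by simp
  finally show ?thesis by (simp add: M_def)
qed

end
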